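(* Let $\alpha\in\mathbb{C}$, $s\in\mathbb{C}\setminus\{0\}$, and for index $n$ consider the discrete system for $(f_n,g_n)$ \[ f_{n+1}f_n=\frac{g_n^2-(\alpha+2n)g_n+(\alpha+n)n}{g_n^2},\qquad g_{n-1}+g_n=\frac{(1-\alpha+s-2n)f_n+\alpha+2n+1}{(f_n-1)^2}, \] together with the differential system in $s$ \[ \frac{df}{ds}=\frac{2f^2g-4fg+(\alpha-s+2n)f+2g-\alpha-2n}{s},\qquad \frac{dg}{ds}=\frac{g^2(1-f^2)-(\alpha+2n)g+(\alpha+n)n}{sf}. \] Define the birational change of variables and parameter identification \[ q=\frac{(f-1)(fg-g+n)}{sf},\qquad p=\frac{s(g-n)}{fg-g+n},\qquad t=s, \] \[ a_0=\alpha+n,\quad a_1=-n,\quad a_2=n,\quad a_3=1-\alpha-n \] (so that $a_1+a_2=0$). Then this change of variables simultaneously transforms the discrete system into the special case $a_1+a_2=0$ of the discrete Painlev\'e equation \[ q_{n+1}=1-q_n-\frac{a_0}{p_n+t}-\frac{a_2}{p_n},\qquad p_{n-1}=-p_n-t+\frac{a_1}{q_n}+\frac{a_3}{q_n-1}, \] with parameter evolution $n\mapsto n+1$ given by $(a_0,a_1,a_2,a_3)\mapsto(a_0+1,a_1-1,a_2+1,a_3-1)$, and transforms the differential system into the Hamiltonian system \[ \frac{dq}{dt}=\frac{1}{t}\Big(q(q-1)(2p+t)-a_1(q-1)-a_3q\Big),\qquad \frac{dp}{dt}=\frac{1}{t}\Big(p(p+t)(1-2q)+(a_1+a_3)p-a_2t\Big).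 \]
   Context: The discrete system arises from ladder operators for polynomials orthogonal with respect to the Laguerre weight $x^\alpha e^{-x}$ on $[0,s]$. The Hamiltonian system is a Hamiltonian form of the fifth Painlev\'e equation, with parameters normalised by $a_0+a_1+a_2+a_3=1$. *)

theory Defs
  imports Complex_Main
begin

definition qmap :: "nat \<Rightarrow> complex \<Rightarrow> complex \<Rightarrow> complex \<Rightarrow> complex" where
  "qmap n s f g = (f - 1) * (f * g - g + of_nat n) / (s * f)"

definition pmap :: "nat \<Rightarrow> complex \<Rightarrow> complex \<Rightarrow> complex \<Rightarrow> complex" where
  "pmap n s f g = s * (g - of_nat n) / (f * g - g + of_nat n)"

definition a0 :: "complex \<Rightarrow> nat \<Rightarrow> complex" where "a0 \<alpha> n = \<alpha> + of_nat n"
definition a1 :: "nat \<Rightarrow> complex" where "a1 n = - of_nat n"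
definition a2 :: "nat \<Rightarrow> complex" where "a2 n = of_nat n"
definition a3 :: "complex \<Rightarrow> nat \<Rightarrow> complex" where "a3 \<alpha> n = 1 - \<alpha> - of_nat n"

end

theory Submission
  imports Defs
begin

lemma disc1:
  fixes a s f g F G :: complex and n :: nat
  assumes s: "s \<noteq> 0" and f0: "f \<noteq> 0" and F0: "F \<noteq> 0" and F1: "F \<noteq> 1" and g0: "g \<noteq> 0"
    and gn: "g \<noteq> of_nat n" and h0: "f * g - g + of_nat n \<noteq> 0"
    and hF: "F * f = (g ^ 2 - (a + 2 * of_nat n) * g + (a + of_nat n) * of_nat n) / g ^ 2"
    and hG: "g + G = ((1 - a + s - 2 * of_nat (Suc n)) * F + a + 2 * of_nat (Suc n) - 1) / (F - 1) ^ 2"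
  shows "qmap (Suc n) s F G = 1 - qmap n s f g - a0 a n / (pmap n s f g + s) - a2 n / pmap n s f g"
proof -
  have G: "G = ((1 - a + s - 2 * of_nat (Suc n)) * F + a + 2 * of_nat (Suc n) - 1) / (F - 1) ^ 2 - g"
    using hG by (simp add: algebra_simps)
  have F1': "F - 1 \<noteq> 0" using F1 by simp
  have G2: "(F-1)^2 * G = ((1 - a + s - 2 * of_nat (Suc n)) * F + a + 2 * of_nat (Suc n) - 1) - g * (F-1)^2"
    using hG F1' by (simp add: field_simps)
  have num: "(F - 1) * (F * G - G + of_nat (Suc n)) = (F-1)^2 * G + (of_nat n + 1) * (F - 1)"
    by (simp add: algebra_simps power2_eq_square)
  have q1: "qmap (Suc n) s F G = (((1 - a + s - 2 * of_nat (Suc n)) * F + a + 2 * of_nat (Suc n) - 1) - g * (F-1)^2 + (of_nat n + 1) * (F - 1)) / (s * F)"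
    unfolding qmap_def num G2 by simp
  define R where "R = g ^ 2 - (a + 2 * of_nat n) * g + (a + of_nat n) * of_nat n"
  have FR: "F = R / (f * g^2)" using hF f0 g0 unfolding R_def by (simp add: field_simps)
  have R0: "R \<noteq> 0" using FR F0 by auto
  have gn': "g - of_nat n \<noteq> 0" using gn by simp
  show ?thesis
    unfolding q1 unfolding FR
    unfolding qmap_def pmap_def a0_def a2_def
    using s f0 R0 g0 gn' h0
    apply (simp add: field_simps)
    unfolding R_def
    by algebra
qed

lemma disc2:
  fixes a s f g fm gm :: complex and m :: nat
  assumes s: "s \<noteq> 0" and f0: "f \<noteq> 0" and f1: "f \<noteq> 1" and gm0: "gm \<noteq> 0"
    and h0: "f * g - g + of_nat (Suc m) \<noteq> 0" and hm0: "fm * gm - gm + of_nat m \<noteq> 0"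
    and q1: "qmap (Suc m) s f g \<noteq> 1"
    and hF: "f * fm = (gm ^ 2 - (a + 2 * of_nat m) * gm + (a + of_nat m) * of_nat m) / gm ^ 2"
    and hG: "gm + g = ((1 - a + s - 2 * of_nat (Suc m)) * f + a + 2 * of_nat (Suc m) - 1) / (f - 1) ^ 2"
  shows "pmap m s fm gm = - pmap (Suc m) s f g - s + a1 (Suc m) / qmap (Suc m) s f g
                 + a3 a (Suc m) / (qmap (Suc m) s f g - 1)"
proof -
  define E where "E = (1 - a + s - 2 * of_nat (Suc m)) * f + a + 2 * of_nat (Suc m) - 1"
  define R where "R = gm ^ 2 - (a + 2 * of_nat m) * gm + (a + of_nat m) * of_nat m"
  define K where "K = R - f * gm^2 + of_nat m * f * gm"
  define L where "L = E - (f-1)^2 * gm + of_nat (Suc m) * (f - 1)"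
  have f1': "f - 1 \<noteq> 0" using f1 by simp
  have ff: "1 + f * f - f * 2 \<noteq> 0"
  proof
    assume "1 + f * f - f * 2 = 0"
    then have "(f - 1)^2 = 0" by (simp add: power2_eq_square algebra_simps)
    then show False using f1' by simp
  qed
  have g: "g = E / (f-1)^2 - gm" using hG f1' unfolding E_def by (simp add: field_simps)
  have fm: "fm = R / (f * gm^2)" using hF f0 gm0 unfolding R_def by (simp add: field_simps)
  have D1: "fm * gm - gm + of_nat m = K / (f * gm)" unfolding fm K_def using f0 gm0
    by (simp add: field_simps power2_eq_square)
  have K0: "K \<noteq> 0" using hm0 D1 by auto
  have pm: "pmap m s fm gm = s * (gm - of_nat m) * f * gm / K"
    unfolding pmap_def D1 using f0 gm0 K0 by (simp add: field_simps)
  have g2: "(f-1)^2 * g = E - (f-1)^2 * gm" using hG f1' unfolding E_def by (simp add: field_simps)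
  have "(f - 1) * (f * g - g + of_nat (Suc m)) = (f-1)^2 * g + of_nat (Suc m) * (f - 1)"
    by (simp add: algebra_simps power2_eq_square)
  also have "... = L" unfolding g2 L_def by simp
  finally have D2: "f * g - g + of_nat (Suc m) = L / (f - 1)" using f1'
    by (simp add: field_simps)
  have L0: "L \<noteq> 0" using D2 h0 by auto
  have qn: "qmap (Suc m) s f g = L / (s * f)" unfolding qmap_def D2 using f1' s f0 by (simp add: field_simps)
  have LS: "L - s * f \<noteq> 0" using q1 qn s f0 by (auto simp: field_simps)
  have qn1: "qmap (Suc m) s f g - 1 = (L - s * f) / (s * f)" unfolding qn using s f0 by (simp add: field_simps)
  have g3: "(f-1)^2 * (g - of_nat (Suc m)) = E - (f-1)^2 * (gm + of_nat (Suc m))"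
    using g2 by (simp add: algebra_simps)
  have "pmap (Suc m) s f g = s * ((f-1)^2 * (g - of_nat (Suc m))) / ((f - 1) * L)"
    unfolding pmap_def D2 using f1' L0 by (simp add: field_simps power2_eq_square)
  then have pn: "pmap (Suc m) s f g = s * (E - (f-1)^2 * (gm + of_nat (Suc m))) / ((f - 1) * L)"
    unfolding g3 .
  define b where "b = 1 - a - of_nat (Suc m)"
  define B where "B = b - (f - 1) * gm"
  have hK: "K = (gm - of_nat m) * B" unfolding K_def R_def B_def b_def
    by (simp add: algebra_simps power2_eq_square)
  have hLs: "L - s * f = (f - 1) * B" unfolding L_def E_def B_def b_def
    by (simp add: algebra_simps power2_eq_square)
  have B0: "B \<noteq> 0" using LS hLs by auto
  have gmm: "gm - of_nat m \<noteq> 0" using K0 hK by auto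
  have pm2: "pmap m s fm gm = s * f * gm / B" unfolding pm hK using gmm B0 by (simp add: field_simps)
  have poly: "(E - (f-1)^2 * (gm + of_nat (Suc m))) + (f - 1) * L + of_nat (Suc m) * f * (f - 1) = f * L"
    unfolding L_def by (simp add: algebra_simps power2_eq_square)
  have key0: "- pmap (Suc m) s f g - s + a1 (Suc m) / qmap (Suc m) s f g
     = - s * ((E - (f-1)^2 * (gm + of_nat (Suc m))) + (f - 1) * L + of_nat (Suc m) * f * (f - 1)) / ((f - 1) * L)"
    unfolding pn qn a1_def using f1' L0 s f0
    by (simp add: field_simps)
  have key: "- pmap (Suc m) s f g - s + a1 (Suc m) / qmap (Suc m) s f g = - s * f / (f - 1)"
    unfolding key0 poly using L0 by simp
  have a3b: "a3 a (Suc m) = b" unfolding a3_def b_def by simp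
  have bB: "b - B = (f - 1) * gm" unfolding B_def by simp
  have e1: "b / ((f - 1) * B / (s * f)) = b * s * f / ((f - 1) * B)" by simp
  have e2u: "- s * f / u + b * s * f / (u * B) = s * f * (b - B) / (u * B)" if "u \<noteq> 0" for u
    using that B0 by (simp add: field_simps)
  have e2: "- s * f / (f - 1) + b * s * f / ((f - 1) * B) = s * f * (b - B) / ((f - 1) * B)"
    using e2u[OF f1'] .
  have e3: "s * f * (b - B) / ((f - 1) * B) = s * f * gm / B"
    unfolding bB using f1' B0 by simp
  have "- pmap (Suc m) s f g - s + a1 (Suc m) / qmap (Suc m) s f g + a3 a (Suc m) / (qmap (Suc m) s f g - 1)
     = s * f * gm / B"
    unfolding key qn1 a3b hLs e1 e2 e3 by simp
  then show ?thesis unfolding pm2 by simp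
qed

lemma derq:
  fixes a t :: complex and f g :: "complex \<Rightarrow> complex" and n :: nat
  assumes t0: "t \<noteq> 0" and f0: "f t \<noteq> 0" and h0: "f t * g t - g t + of_nat n \<noteq> 0"
    and df: "(f has_field_derivative
               (2 * f t ^ 2 * g t - 4 * f t * g t + (a - t + 2 * of_nat n) * f t
                + 2 * g t - a - 2 * of_nat n) / t) (at t)"
    and dg: "(g has_field_derivative
               (g t ^ 2 * (1 - f t ^ 2) - (a + 2 * of_nat n) * g t
                + (a + of_nat n) * of_nat n) / (t * f t)) (at t)"
  shows "((\<lambda>t. qmap n t (f t) (g t)) has_field_derivative
              (let q = qmap n t (f t) (g t); p = pmap n t (f t) (g t) in
                 (q * (q - 1) * (2 * p + t) - a1 n * (q - 1) - a3 a n * q) / t)) (at t)"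
  unfolding qmap_def pmap_def Let_def
  apply (rule derivative_eq_intros df dg refl | simp add: t0 f0)+
  subgoal
  proof -
    define D where "D = f t * g t - g t + of_nat n"
    have D0: "D \<noteq> 0" using h0 D_def by simp
    show ?thesis
      unfolding D_def[symmetric] a1_def a3_def
      using t0 f0 D0
      apply (simp add: field_simps)
      apply (thin_tac _)+
      unfolding D_def
      apply (simp add: algebra_simps power2_eq_square)
      done
  qed
  done
lemma derp:
  fixes a t :: complex and f g :: "complex \<Rightarrow> complex" and n :: nat
  assumes t0: "t \<noteq> 0" and f0: "f t \<noteq> 0" and h0: "f t * g t - g t + of_nat n \<noteq> 0"
    and df: "(f has_field_derivative
               (2 * f t ^ 2 * g t - 4 * f t * g t + (a - t + 2 * of_nat n) * f t
                + 2 * g t - a - 2 * of_nat n) / t) (at t)"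
    and dg: "(g has_field_derivative
               (g t ^ 2 * (1 - f t ^ 2) - (a + 2 * of_nat n) * g t
                + (a + of_nat n) * of_nat n) / (t * f t)) (at t)"
  shows "((\<lambda>t. pmap n t (f t) (g t)) has_field_derivative
              (let q = qmap n t (f t) (g t); p = pmap n t (f t) (g t) in
                 (p * (p + t) * (1 - 2 * q) + (a1 n + a3 a n) * p - a2 n * t) / t)) (at t)"
  unfolding qmap_def pmap_def Let_def
  apply (rule derivative_eq_intros df dg refl | simp add: t0 f0 h0)+
  subgoal
  proof -
    define D where "D = f t * g t - g t + of_nat n"
    have D0: "D \<noteq> 0" using h0 D_def by simp
    show ?thesis
      unfolding D_def[symmetric] a1_def a2_def a3_def
      using t0 f0 D0
      apply (simp add: field_simps)
      apply (thin_tac _)+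
      unfolding D_def
      apply (simp add: algebra_simps power2_eq_square)
      done
  qed
  done

theorem proposition4p11:
  fixes \<alpha> :: complex
  shows
    \<comment> \<open>parameter normalisation, special case a1 + a2 = 0, and evolution n to n+1\<close>
    "(\<forall>n. a0 \<alpha> n + a1 n + a2 n + a3 \<alpha> n = 1 \<and> a1 n + a2 n = 0 \<and>
          a0 \<alpha> (Suc n) = a0 \<alpha> n + 1 \<and> a1 (Suc n) = a1 n - 1 \<and>
          a2 (Suc n) = a2 n + 1 \<and> a3 \<alpha> (Suc n) = a3 \<alpha> n - 1)
     \<and>
    \<comment> \<open>discrete system is mapped to the discrete Painleve equation\<close>
     (\<forall>(s::complex) (f::nat \<Rightarrow> complex) (g::nat \<Rightarrow> complex).
        s \<noteq> 0
        \<and> (\<forall>n. f n \<noteq> 0 \<and> f n \<noteq> 1 \<and> g n \<noteq> 0 \<and> g n \<noteq> of_nat n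
               \<and> f n * g n - g n + of_nat n \<noteq> 0 \<and> qmap n s (f n) (g n) \<noteq> 1)
        \<and> (\<forall>n. f (Suc n) * f n
                 = (g n ^ 2 - (\<alpha> + 2 * of_nat n) * g n + (\<alpha> + of_nat n) * of_nat n) / g n ^ 2)
        \<and> (\<forall>n\<ge>1. g (n - 1) + g n
                 = ((1 - \<alpha> + s - 2 * of_nat n) * f n + \<alpha> + 2 * of_nat n - 1) / (f n - 1) ^ 2)
      \<longrightarrow>
        (\<forall>n. qmap (Suc n) s (f (Suc n)) (g (Suc n))
               = 1 - qmap n s (f n) (g n)
                   - a0 \<alpha> n / (pmap n s (f n) (g n) + s)
                   - a2 n / pmap n s (f n) (g n))
      \<and> (\<forall>n\<ge>1. pmap (n - 1) s (f (n - 1)) (g (n - 1))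
               = - pmap n s (f n) (g n) - s
                 + a1 n / qmap n s (f n) (g n)
                 + a3 \<alpha> n / (qmap n s (f n) (g n) - 1)))
     \<and>
    \<comment> \<open>differential system in s is mapped to the Hamiltonian system (t = s)\<close>
     (\<forall>(n::nat) (S::complex set) (f::complex \<Rightarrow> complex) (g::complex \<Rightarrow> complex).
        open S \<and> 0 \<notin> S
        \<and> (\<forall>s\<in>S. f s \<noteq> 0 \<and> f s * g s - g s + of_nat n \<noteq> 0)
        \<and> (\<forall>s\<in>S. (f has_field_derivative
               (2 * f s ^ 2 * g s - 4 * f s * g s + (\<alpha> - s + 2 * of_nat n) * f s
                + 2 * g s - \<alpha> - 2 * of_nat n) / s) (at s))
        \<and> (\<forall>s\<in>S. (g has_field_derivative
               (g s ^ 2 * (1 - f s ^ 2) - (\<alpha> + 2 * of_nat n) * g s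
                + (\<alpha> + of_nat n) * of_nat n) / (s * f s)) (at s))
      \<longrightarrow>
        (\<forall>t\<in>S.
           ((\<lambda>t. qmap n t (f t) (g t)) has_field_derivative
              (let q = qmap n t (f t) (g t); p = pmap n t (f t) (g t) in
                 (q * (q - 1) * (2 * p + t) - a1 n * (q - 1) - a3 \<alpha> n * q) / t)) (at t)
         \<and> ((\<lambda>t. pmap n t (f t) (g t)) has_field_derivative
              (let q = qmap n t (f t) (g t); p = pmap n t (f t) (g t) in
                 (p * (p + t) * (1 - 2 * q) + (a1 n + a3 \<alpha> n) * p - a2 n * t) / t)) (at t)))"
  proof (intro conjI allI impI ballI)
  fix n
  show "a0 \<alpha> n + a1 n + a2 n + a3 \<alpha> n = 1" "a1 n + a2 n = 0" "a0 \<alpha> (Suc n) = a0 \<alpha> n + 1"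
    "a1 (Suc n) = a1 n - 1" "a2 (Suc n) = a2 n + 1" "a3 \<alpha> (Suc n) = a3 \<alpha> n - 1"
    by (simp_all add: a0_def a1_def a2_def a3_def algebra_simps)
next
  fix s :: complex and f g :: "nat \<Rightarrow> complex"
  assume H: "s \<noteq> 0
        \<and> (\<forall>n. f n \<noteq> 0 \<and> f n \<noteq> 1 \<and> g n \<noteq> 0 \<and> g n \<noteq> of_nat n
               \<and> f n * g n - g n + of_nat n \<noteq> 0 \<and> qmap n s (f n) (g n) \<noteq> 1)
        \<and> (\<forall>n. f (Suc n) * f n
                 = (g n ^ 2 - (\<alpha> + 2 * of_nat n) * g n + (\<alpha> + of_nat n) * of_nat n) / g n ^ 2)
        \<and> (\<forall>n\<ge>1. g (n - 1) + g n
                 = ((1 - \<alpha> + s - 2 * of_nat n) * f n + \<alpha> + 2 * of_nat n - 1) / (f n - 1) ^ 2)"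
  then have s0: "s \<noteq> 0"
    and nz: "\<And>n. f n \<noteq> 0 \<and> f n \<noteq> 1 \<and> g n \<noteq> 0 \<and> g n \<noteq> of_nat n
               \<and> f n * g n - g n + of_nat n \<noteq> 0 \<and> qmap n s (f n) (g n) \<noteq> 1"
    and hf: "\<And>n. f (Suc n) * f n
                 = (g n ^ 2 - (\<alpha> + 2 * of_nat n) * g n + (\<alpha> + of_nat n) * of_nat n) / g n ^ 2"
    and hg: "\<And>n. n \<ge> 1 \<Longrightarrow> g (n - 1) + g n
                 = ((1 - \<alpha> + s - 2 * of_nat n) * f n + \<alpha> + 2 * of_nat n - 1) / (f n - 1) ^ 2"
    by auto
  {
    fix n :: nat
    have hg1: "g n + g (Suc n) = ((1 - \<alpha> + s - 2 * of_nat (Suc n)) * f (Suc n) + \<alpha> + 2 * of_nat (Suc n) - 1) / (f (Suc n) - 1) ^ 2"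
      using hg[of "Suc n"] by simp
    show "qmap (Suc n) s (f (Suc n)) (g (Suc n))
               = 1 - qmap n s (f n) (g n)
                   - a0 \<alpha> n / (pmap n s (f n) (g n) + s)
                   - a2 n / pmap n s (f n) (g n)"
      using disc1[OF s0 _ _ _ _ _ _ _ hg1] nz[of n] nz[of "Suc n"] hf[of n] by (simp add: mult.commute)
  }
  {
    fix n :: nat
    assume "1 \<le> n"
    then obtain m where nm: "n = Suc m" by (cases n) auto
    have hg1: "g m + g (Suc m) = ((1 - \<alpha> + s - 2 * of_nat (Suc m)) * f (Suc m) + \<alpha> + 2 * of_nat (Suc m) - 1) / (f (Suc m) - 1) ^ 2"
      using hg[of "Suc m"] by simp
    have "pmap m s (f m) (g m) = - pmap (Suc m) s (f (Suc m)) (g (Suc m)) - s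
                 + a1 (Suc m) / qmap (Suc m) s (f (Suc m)) (g (Suc m))
                 + a3 \<alpha> (Suc m) / (qmap (Suc m) s (f (Suc m)) (g (Suc m)) - 1)"
      using disc2[OF s0 _ _ _ _ _ _ _ hg1] nz[of m] nz[of "Suc m"] hf[of m] by simp
    then show "pmap (n - 1) s (f (n - 1)) (g (n - 1))
               = - pmap n s (f n) (g n) - s
                 + a1 n / qmap n s (f n) (g n)
                 + a3 \<alpha> n / (qmap n s (f n) (g n) - 1)" unfolding nm by simp
  }
next
  fix n :: nat and S :: "complex set" and f g :: "complex \<Rightarrow> complex" and t
  assume H: "open S \<and> 0 \<notin> S
        \<and> (\<forall>s\<in>S. f s \<noteq> 0 \<and> f s * g s - g s + of_nat n \<noteq> 0)
        \<and> (\<forall>s\<in>S. (f has_field_derivative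
               (2 * f s ^ 2 * g s - 4 * f s * g s + (\<alpha> - s + 2 * of_nat n) * f s
                + 2 * g s - \<alpha> - 2 * of_nat n) / s) (at s))
        \<and> (\<forall>s\<in>S. (g has_field_derivative
               (g s ^ 2 * (1 - f s ^ 2) - (\<alpha> + 2 * of_nat n) * g s
                + (\<alpha> + of_nat n) * of_nat n) / (s * f s)) (at s))"
    and tS: "t \<in> S"
  then have t0: "t \<noteq> 0" by auto
  from H tS show "((\<lambda>t. qmap n t (f t) (g t)) has_field_derivative
              (let q = qmap n t (f t) (g t); p = pmap n t (f t) (g t) in
                 (q * (q - 1) * (2 * p + t) - a1 n * (q - 1) - a3 \<alpha> n * q) / t)) (at t)"
    using derq[OF t0] by blast
  from H tS show "((\<lambda>t. pmap n t (f t) (g t)) has_field_derivative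
              (let q = qmap n t (f t) (g t); p = pmap n t (f t) (g t) in
                 (p * (p + t) * (1 - 2 * q) + (a1 n + a3 \<alpha> n) * p - a2 n * t) / t)) (at t)"
    using derp[OF t0] by blast
qed

end
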